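(* Let $I=\langle Q,D,\tau_{in},\tau_{out},\tau_{mem}\rangle$ be an instance of Forget where $Q$ is nonrecursive, connected, contains no rigid atoms and no time points in its rules, and let $Q_1,Q_2$ be the queries constructed from $I$ as in the context. Then Forget holds for $I$ if and only if $Q_1\sqsubseteq Q_2$.
   Context: Temporal Datalog. Constants are partitioned into objects and integer time points; variables into object variables and time variables. A time term is a time point, a time variable, or an expression $t+k$ with $t$ a time variable and $k\in\mathbb{Z}$. Each predicate is either extensional (EDB) or intensional (IDB) and has an arity $n\ge0$, each position being of object sort or time sort; a predicate is rigid if all its positions are of object sort, and temporal if its last position is of time sort and all others are of object sort. An atom $P(t_1,\dots,t_n)$ has terms of the required sorts. A rule is $\bigwedge_i\alpha_i\to\alpha$ with $\alpha$ and all $\alpha_i$ rigid or temporal atoms, $\alpha$ IDB whenever the body is nonempty, and every head variable occurring in the body. A program is a finite set of rules. A fact is a ground rigid or temporal atom without $+$ (identified with the rule $\top\to\alpha$); a dataset is a finite set of EDB facts. Rules are read as universally quantified first-order sentences with $+$ interpreted as integer addition; $\Pi\models\alpha$ denotes entailment. A query is $Q=\langle P_Q,\Pi_Q\rangle$ with $\Pi_Q$ a program and $P_Q$ an IDB predicate of $\Pi_Q$; it is temporal if $P_Q$ is temporal. $Q(D)$ is the set of tuples $\vec a$ of constants with $\Pi_Q\cup D\models P_Q(\vec a)$; for a temporal query $Q$ and time point $\tau$, $Q(D,\tau)$ is the set of tuples of objects $\vec o$ with $\Pi_Q\cup D\models P_Q(\vec o,\tau)$. $Q_1\sqsubseteq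 Q_2$ means $Q_1(D)\subseteq Q_2(D)$ for every dataset $D$. For a dataset $D$ and time point $\tau$, $D[\tau]$ is the set of all rigid facts of $D$ together with the temporal facts of $D$ whose time argument is $>\tau$. A $\tau_{in}$-history is a dataset consisting of rigid facts and temporal facts with time argument $\le\tau_{in}$; a $\tau_{in}$-update is a dataset consisting of temporal facts with time argument $>\tau_{in}$. Forget: an instance is $\langle Q,D,\tau_{in},\tau_{out},\tau_{mem}\rangle$ with $Q$ a temporal query, $D$ a $\tau_{in}$-history and $\tau_{mem}\le\tau_{out}\le\tau_{in}$; Forget holds for it iff $Q(D\cup U,\tau)=Q(D[\tau_{mem}]\cup U,\tau)$ for every $\tau_{in}$-update $U$ and every time point $\tau\ge\tau_{out}$. Predicate $P$ depends on $P'$ in $\Pi$ if some rule of $\Pi$ has $P$ in the head and $P'$ in the body; $\Pi$ (or a query with program $\Pi$) is nonrecursive if the graph of this dependency relation is acyclic. A rule is connected if it contains at most one time variable and, if a time variable occurs in the body, it also occurs in the head; a query is connected if all its rules are. For a time term $s$, $\Delta(s)=k$ if $s=t+k$ with $t$ a variable, and $\Delta(s)=0$ otherwise. The radius of a connected rule $r$ mentioning a time variable is the maximum of $|\Delta(s)-\Delta(s')|$ where $s$ is the time argument of the head and $s'$ the time argument of a body atom of $r$. The radius $\mathrm{rad}(\Pi)$ of a connected program is the number of rules of $\Pi$ times the maximum radius of a rule of $\Pi$; $\mathrm{rad}(Q)=\mathrm{rad}(\Pi_Q)$. Construction: a time point $\tau$ is output-relevant if $\tau_{out}\le\tau\le\tau_{mem}+\mathrm{rad}(Q)$,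 and update-relevant if $\tau_{in}<\tau\le\tau_{mem}+2\,\mathrm{rad}(Q)$. Let $\psi$ map each temporal EDB predicate to a fresh temporal IDB predicate of the same arity (applied to programs/datasets by renaming). Let $B$ be a fresh unary temporal IDB predicate and $D_0=\{B(\tau):\tau\text{ update-relevant}\}$. Let $\Pi$ be the smallest program containing: (i) each rule of $\psi(\Pi_Q)$ whose head predicate differs from $P_Q$; (ii) each rule obtained from a rule of $\psi(\Pi_Q)$ with head predicate $P_Q$ by substituting its time variable so that the time argument of the head becomes an output-relevant time point; (iii) the rule $P(\vec x,t)\wedge B(t)\to\psi(P)(\vec x,t)$ for each temporal EDB predicate $P$ of $\Pi_Q$. Then $Q_1=\langle P_Q,\Pi\cup D_0\cup\psi(D)\rangle$ and $Q_2=\langle P_Q,\Pi\cup D_0\cup\psi(D[\tau_{mem}])\rangle$. *)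

theory Defs
  imports Main
begin

text \<open>Signature of a predicate: it is rigid with n object positions, or temporal with
  n object positions followed by one time position.  (Only rigid and temporal predicates
  can occur in rules and facts.)  A signature maps each predicate to a pair
  (is EDB, shape); IDB means not EDB.\<close>

datatype pshape = Rigid nat | Temporal nat

type_synonym 'p signature = "'p \<Rightarrow> bool \<times> pshape"

text \<open>Time terms: time points, or t + k for a time variable t and k an integer
  (the plain variable t is represented as t + 0).\<close>

datatype 'o oterm = OC 'o | OV nat
datatype tterm = TC int | TV nat int

datatype ('p,'o) atom = Atom 'p "'o oterm list" "tterm option"

type_synonym ('p,'o) rule = "('p,'o) atom list \<times> ('p,'o) atom"

datatype ('p,'o) gatom = GA 'p "'o list" "int option"

fun apred :: "('p,'o) atom \<Rightarrow> 'p" where "apred (Atom p _ _) = p"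
fun atime :: "('p,'o) atom \<Rightarrow> tterm option" where "atime (Atom _ _ t) = t"
fun gpred :: "('p,'o) gatom \<Rightarrow> 'p" where "gpred (GA p _ _) = p"
fun gtime :: "('p,'o) gatom \<Rightarrow> int option" where "gtime (GA _ _ t) = t"

fun ovar_of :: "'o oterm \<Rightarrow> nat set" where
  "ovar_of (OC _) = {}" | "ovar_of (OV x) = {x}"
fun tvar_of :: "tterm \<Rightarrow> nat set" where
  "tvar_of (TC _) = {}" | "tvar_of (TV t _) = {t}"

fun aovars :: "('p,'o) atom \<Rightarrow> nat set" where
  "aovars (Atom _ os _) = (\<Union>x\<in>set os. ovar_of x)"
fun atvars :: "('p,'o) atom \<Rightarrow> nat set" where
  "atvars (Atom _ _ t) = (case t of None \<Rightarrow> {} | Some s \<Rightarrow> tvar_of s)"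

definition is_edb :: "'p signature \<Rightarrow> 'p \<Rightarrow> bool" where
  "is_edb sig p = fst (sig p)"

definition is_temporal :: "'p signature \<Rightarrow> 'p \<Rightarrow> bool" where
  "is_temporal sig p = (\<exists>n. snd (sig p) = Temporal n)"

definition is_rigid :: "'p signature \<Rightarrow> 'p \<Rightarrow> bool" where
  "is_rigid sig p = (\<exists>n. snd (sig p) = Rigid n)"

fun wf_atom :: "'p signature \<Rightarrow> ('p,'o) atom \<Rightarrow> bool" where
  "wf_atom sig (Atom p os t) =
     (case snd (sig p) of Rigid n \<Rightarrow> length os = n \<and> t = None
                        | Temporal n \<Rightarrow> length os = n \<and> t \<noteq> None)"

fun wf_gatom :: "'p signature \<Rightarrow> ('p,'o) gatom \<Rightarrow> bool" where
  "wf_gatom sig (GA p os t) =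
     (case snd (sig p) of Rigid n \<Rightarrow> length os = n \<and> t = None
                        | Temporal n \<Rightarrow> length os = n \<and> t \<noteq> None)"

definition wf_rule :: "'p signature \<Rightarrow> ('p,'o) rule \<Rightarrow> bool" where
  "wf_rule sig r =
     ((\<forall>a\<in>set (snd r # fst r). wf_atom sig a)
      \<and> (fst r \<noteq> [] \<longrightarrow> \<not> is_edb sig (apred (snd r)))
      \<and> aovars (snd r) \<subseteq> (\<Union>a\<in>set (fst r). aovars a)
      \<and> atvars (snd r) \<subseteq> (\<Union>a\<in>set (fst r). atvars a))"

definition wf_program :: "'p signature \<Rightarrow> ('p,'o) rule set \<Rightarrow> bool" where
  "wf_program sig \<Pi> = (finite \<Pi> \<and> (\<forall>r\<in>\<Pi>. wf_rule sig r))"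

definition rule_atoms :: "('p,'o) rule \<Rightarrow> ('p,'o) atom set" where
  "rule_atoms r = set (snd r # fst r)"

definition preds_of :: "('p,'o) rule set \<Rightarrow> 'p set" where
  "preds_of \<Pi> = {apred a | a r. r \<in> \<Pi> \<and> a \<in> rule_atoms r}"

fun fact_rule :: "('p,'o) gatom \<Rightarrow> ('p,'o) rule" where
  "fact_rule (GA p os t) = ([], Atom p (map OC os) (map_option TC t))"

fun oinst :: "(nat \<Rightarrow> 'o) \<Rightarrow> 'o oterm \<Rightarrow> 'o" where
  "oinst \<nu> (OC c) = c" | "oinst \<nu> (OV x) = \<nu> x"
fun tinst :: "(nat \<Rightarrow> int) \<Rightarrow> tterm \<Rightarrow> int" where
  "tinst \<mu> (TC c) = c" | "tinst \<mu> (TV t k) = \<mu> t + k"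
fun inst :: "(nat \<Rightarrow> 'o) \<Rightarrow> (nat \<Rightarrow> int) \<Rightarrow> ('p,'o) atom \<Rightarrow> ('p,'o) gatom" where
  "inst \<nu> \<mu> (Atom p os t) = GA p (map (oinst \<nu>) os) (map_option (tinst \<mu>) t)"

text \<open>(Herbrand) interpretations are sets of ground atoms; time is interpreted in the
  integers with + as integer addition; rules are universally quantified.\<close>
definition is_model :: "('p,'o) rule set \<Rightarrow> ('p,'o) gatom set \<Rightarrow> bool" where
  "is_model \<Pi> I = (\<forall>r\<in>\<Pi>. \<forall>\<nu> \<mu>. (\<forall>a\<in>set (fst r). inst \<nu> \<mu> a \<in> I) \<longrightarrow> inst \<nu> \<mu> (snd r) \<in> I)"

definition entails :: "('p,'o) rule set \<Rightarrow> ('p,'o) gatom \<Rightarrow> bool" where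
  "entails \<Pi> \<alpha> = (\<forall>I. is_model \<Pi> I \<longrightarrow> \<alpha> \<in> I)"

definition dataset :: "'p signature \<Rightarrow> ('p,'o) gatom set \<Rightarrow> bool" where
  "dataset sig D = (finite D \<and> (\<forall>\<alpha>\<in>D. wf_gatom sig \<alpha> \<and> is_edb sig (gpred \<alpha>)))"

type_synonym ('p,'o) query = "'p \<times> ('p,'o) rule set"

definition is_query :: "'p signature \<Rightarrow> ('p,'o) query \<Rightarrow> bool" where
  "is_query sig Q = (wf_program sig (snd Q) \<and> fst Q \<in> preds_of (snd Q) \<and> \<not> is_edb sig (fst Q))"

definition is_temporal_query :: "'p signature \<Rightarrow> ('p,'o) query \<Rightarrow> bool" where
  "is_temporal_query sig Q = (is_query sig Q \<and> is_temporal sig (fst Q))"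

definition answers :: "('p,'o) query \<Rightarrow> ('p,'o) gatom set \<Rightarrow> ('o list \<times> int option) set" where
  "answers Q D = {(os, t). entails (snd Q \<union> fact_rule ` D) (GA (fst Q) os t)}"

definition answers_at :: "('p,'o) query \<Rightarrow> ('p,'o) gatom set \<Rightarrow> int \<Rightarrow> 'o list set" where
  "answers_at Q D \<tau> = {os. entails (snd Q \<union> fact_rule ` D) (GA (fst Q) os (Some \<tau>))}"

definition contained :: "'p signature \<Rightarrow> ('p,'o) query \<Rightarrow> ('p,'o) query \<Rightarrow> bool" where
  "contained sig Q1 Q2 = (\<forall>D. dataset sig D \<longrightarrow> answers Q1 D \<subseteq> answers Q2 D)"

definition restrict_after :: "('p,'o) gatom set \<Rightarrow> int \<Rightarrow> ('p,'o) gatom set" where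
  "restrict_after D \<tau> = {\<alpha>\<in>D. gtime \<alpha> = None \<or> (\<exists>s. gtime \<alpha> = Some s \<and> s > \<tau>)}"

definition is_history :: "'p signature \<Rightarrow> int \<Rightarrow> ('p,'o) gatom set \<Rightarrow> bool" where
  "is_history sig \<tau>in D = (dataset sig D \<and> (\<forall>\<alpha>\<in>D. \<forall>s. gtime \<alpha> = Some s \<longrightarrow> s \<le> \<tau>in))"

definition is_update :: "'p signature \<Rightarrow> int \<Rightarrow> ('p,'o) gatom set \<Rightarrow> bool" where
  "is_update sig \<tau>in U = (dataset sig U \<and> (\<forall>\<alpha>\<in>U. \<exists>s. gtime \<alpha> = Some s \<and> s > \<tau>in))"

definition forget_instance ::
  "'p signature \<Rightarrow> ('p,'o) query \<Rightarrow> ('p,'o) gatom set \<Rightarrow> int \<Rightarrow> int \<Rightarrow> int \<Rightarrow> bool" where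
  "forget_instance sig Q D \<tau>in \<tau>out \<tau>mem =
     (is_temporal_query sig Q \<and> is_history sig \<tau>in D \<and> \<tau>mem \<le> \<tau>out \<and> \<tau>out \<le> \<tau>in)"

definition forget_holds ::
  "'p signature \<Rightarrow> ('p,'o) query \<Rightarrow> ('p,'o) gatom set \<Rightarrow> int \<Rightarrow> int \<Rightarrow> int \<Rightarrow> bool" where
  "forget_holds sig Q D \<tau>in \<tau>out \<tau>mem =
     (\<forall>U \<tau>. is_update sig \<tau>in U \<longrightarrow> \<tau> \<ge> \<tau>out \<longrightarrow>
        answers_at Q (D \<union> U) \<tau> = answers_at Q (restrict_after D \<tau>mem \<union> U) \<tau>)"

definition depends :: "('p,'o) rule set \<Rightarrow> ('p \<times> 'p) set" where
  "depends \<Pi> = {(apred (snd r), apred a) | r a. r \<in> \<Pi> \<and> a \<in> set (fst r)}"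

definition nonrecursive :: "('p,'o) rule set \<Rightarrow> bool" where
  "nonrecursive \<Pi> = acyclic (depends \<Pi>)"

definition rule_tvars :: "('p,'o) rule \<Rightarrow> nat set" where
  "rule_tvars r = (\<Union>a\<in>rule_atoms r. atvars a)"

definition connected_rule :: "('p,'o) rule \<Rightarrow> bool" where
  "connected_rule r = (card (rule_tvars r) \<le> 1
      \<and> (\<Union>a\<in>set (fst r). atvars a) \<subseteq> atvars (snd r))"

definition connected_prog :: "('p,'o) rule set \<Rightarrow> bool" where
  "connected_prog \<Pi> = (\<forall>r\<in>\<Pi>. connected_rule r)"

definition no_rigid_atoms :: "'p signature \<Rightarrow> ('p,'o) rule set \<Rightarrow> bool" where
  "no_rigid_atoms sig \<Pi> = (\<forall>r\<in>\<Pi>. \<forall>a\<in>rule_atoms r. \<not> is_rigid sig (apred a))"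

definition no_time_points :: "('p,'o) rule set \<Rightarrow> bool" where
  "no_time_points \<Pi> = (\<forall>r\<in>\<Pi>. \<forall>a\<in>rule_atoms r. \<forall>c. atime a \<noteq> Some (TC c))"

fun delta :: "tterm \<Rightarrow> int" where
  "delta (TV _ k) = k" | "delta (TC _) = 0"

definition rule_radius :: "('p,'o) rule \<Rightarrow> int" where
  "rule_radius r = Max ({0} \<union> {\<bar>delta s - delta s'\<bar> | s s' a.
       atime (snd r) = Some s \<and> a \<in> set (fst r) \<and> atime a = Some s'})"

definition prog_radius :: "('p,'o) rule set \<Rightarrow> int" where
  "prog_radius \<Pi> = int (card \<Pi>) * Max ({0} \<union> rule_radius ` \<Pi>)"

datatype 'p xpred = Orig 'p | Psi 'p | Bp

definition xsig :: "'p signature \<Rightarrow> 'p xpred signature" where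
  "xsig sig q = (case q of Orig p \<Rightarrow> sig p
                        | Psi p \<Rightarrow> (False, snd (sig p))
                        | Bp \<Rightarrow> (False, Temporal 0))"

definition psi :: "'p signature \<Rightarrow> 'p \<Rightarrow> 'p xpred" where
  "psi sig p = (if is_edb sig p \<and> is_temporal sig p then Psi p else Orig p)"

fun psi_atom :: "'p signature \<Rightarrow> ('p,'o) atom \<Rightarrow> ('p xpred,'o) atom" where
  "psi_atom sig (Atom p os t) = Atom (psi sig p) os t"

definition psi_rule :: "'p signature \<Rightarrow> ('p,'o) rule \<Rightarrow> ('p xpred,'o) rule" where
  "psi_rule sig r = (map (psi_atom sig) (fst r), psi_atom sig (snd r))"

fun psi_gatom :: "'p signature \<Rightarrow> ('p,'o) gatom \<Rightarrow> ('p xpred,'o) gatom" where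
  "psi_gatom sig (GA p os t) = GA (psi sig p) os t"

fun subst_t :: "nat \<Rightarrow> int \<Rightarrow> tterm \<Rightarrow> tterm" where
  "subst_t v c (TV v' k) = (if v' = v then TC (c + k) else TV v' k)"
| "subst_t v c (TC d) = TC d"

fun subst_atom :: "nat \<Rightarrow> int \<Rightarrow> ('p,'o) atom \<Rightarrow> ('p,'o) atom" where
  "subst_atom v c (Atom p os t) = Atom p os (map_option (subst_t v c) t)"

definition subst_rule :: "nat \<Rightarrow> int \<Rightarrow> ('p,'o) rule \<Rightarrow> ('p,'o) rule" where
  "subst_rule v c r = (map (subst_atom v c) (fst r), subst_atom v c (snd r))"

definition output_relevant :: "('p,'o) query \<Rightarrow> int \<Rightarrow> int \<Rightarrow> int \<Rightarrow> bool" where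
  "output_relevant Q \<tau>out \<tau>mem \<tau> = (\<tau>out \<le> \<tau> \<and> \<tau> \<le> \<tau>mem + prog_radius (snd Q))"

definition update_relevant :: "('p,'o) query \<Rightarrow> int \<Rightarrow> int \<Rightarrow> int \<Rightarrow> bool" where
  "update_relevant Q \<tau>in \<tau>mem \<tau> = (\<tau>in < \<tau> \<and> \<tau> \<le> \<tau>mem + 2 * prog_radius (snd Q))"

definition constr_prog ::
  "'p signature \<Rightarrow> ('p,'o) query \<Rightarrow> int \<Rightarrow> int \<Rightarrow> ('p xpred,'o) rule set" where
  "constr_prog sig Q \<tau>out \<tau>mem =
     {r \<in> psi_rule sig ` snd Q. apred (snd r) \<noteq> Orig (fst Q)}
   \<union> {subst_rule v (\<tau> - k) r | r v k \<tau>. r \<in> psi_rule sig ` snd Q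
        \<and> apred (snd r) = Orig (fst Q) \<and> atime (snd r) = Some (TV v k)
        \<and> output_relevant Q \<tau>out \<tau>mem \<tau>}
   \<union> {([Atom (Orig p) (map OV [0..<n]) (Some (TV 0 0)), Atom Bp [] (Some (TV 0 0))],
         Atom (Psi p) (map OV [0..<n]) (Some (TV 0 0))) | p n.
        p \<in> preds_of (snd Q) \<and> is_edb sig p \<and> snd (sig p) = Temporal n}"

definition D0 :: "('p,'o) query \<Rightarrow> int \<Rightarrow> int \<Rightarrow> ('p xpred,'o) gatom set" where
  "D0 Q \<tau>in \<tau>mem = {GA Bp [] (Some \<tau>) | \<tau>. update_relevant Q \<tau>in \<tau>mem \<tau>}"

definition Q1 ::
  "'p signature \<Rightarrow> ('p,'o) query \<Rightarrow> ('p,'o) gatom set \<Rightarrow> int \<Rightarrow> int \<Rightarrow> int \<Rightarrow> ('p xpred,'o) query" where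
  "Q1 sig Q D \<tau>in \<tau>out \<tau>mem =
     (Orig (fst Q), constr_prog sig Q \<tau>out \<tau>mem \<union> fact_rule ` D0 Q \<tau>in \<tau>mem
                    \<union> fact_rule ` psi_gatom sig ` D)"

definition Q2 ::
  "'p signature \<Rightarrow> ('p,'o) query \<Rightarrow> ('p,'o) gatom set \<Rightarrow> int \<Rightarrow> int \<Rightarrow> int \<Rightarrow> ('p xpred,'o) query" where
  "Q2 sig Q D \<tau>in \<tau>out \<tau>mem =
     (Orig (fst Q), constr_prog sig Q \<tau>out \<tau>mem \<union> fact_rule ` D0 Q \<tau>in \<tau>mem
                    \<union> fact_rule ` psi_gatom sig ` restrict_after D \<tau>mem)"

end

theory Submission
  imports Defs
begin


inductive derivable :: "('p,'o) rule set \<Rightarrow> ('p,'o) gatom \<Rightarrow> bool" for \<Pi> where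
  der: "r \<in> \<Pi> \<Longrightarrow> (\<And>a. a \<in> set (fst r) \<Longrightarrow> derivable \<Pi> (inst \<nu> \<mu> a)) \<Longrightarrow> derivable \<Pi> (inst \<nu> \<mu> (snd r))"

lemma derivable_model: "derivable \<Pi> g \<Longrightarrow> is_model \<Pi> I \<Longrightarrow> g \<in> I"
  by (induction rule: derivable.induct) (auto simp: is_model_def)

lemma model_derivable: "is_model \<Pi> {g. derivable \<Pi> g}"
  unfolding is_model_def by (auto intro: der)

lemma entails_iff: "entails \<Pi> g \<longleftrightarrow> derivable \<Pi> g"
  unfolding entails_def using derivable_model model_derivable by blast

lemma derivable_mono: "derivable \<Pi> g \<Longrightarrow> \<Pi> \<subseteq> \<Pi>' \<Longrightarrow> derivable \<Pi>' g"
  by (induction rule: derivable.induct) (auto intro: der)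

lemma inst_fact[simp]: "inst \<nu> \<mu> (snd (fact_rule g)) = g" "fst (fact_rule g) = []"
  by (cases g; simp add: option.map_comp comp_def option.map_ident)+

lemma der_fact: "fact_rule g \<in> \<Pi> \<Longrightarrow> derivable \<Pi> g"
  using der[of "fact_rule g" \<Pi> undefined undefined] by simp

definition rk :: "('p,'o) rule set \<Rightarrow> 'p \<Rightarrow> nat" where
  "rk \<Pi> q = card {r\<in>\<Pi>. (q, apred (snd r)) \<in> (depends \<Pi>)\<^sup>*}"

lemma rk_less:
  assumes "finite \<Pi>" "acyclic (depends \<Pi>)" "r \<in> \<Pi>" "b \<in> set (fst r)"
  shows "rk \<Pi> (apred b) < rk \<Pi> (apred (snd r))"
proof -
  have d: "(apred (snd r), apred b) \<in> depends \<Pi>" using assms unfolding depends_def by blast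
  have sub: "{r'\<in>\<Pi>. (apred b, apred (snd r')) \<in> (depends \<Pi>)\<^sup>*} \<subseteq> {r'\<in>\<Pi>. (apred (snd r), apred (snd r')) \<in> (depends \<Pi>)\<^sup>*}"
    using d by (auto intro: converse_rtrancl_into_rtrancl)
  have "r \<notin> {r'\<in>\<Pi>. (apred b, apred (snd r')) \<in> (depends \<Pi>)\<^sup>*}"
  proof
    assume "r \<in> {r'\<in>\<Pi>. (apred b, apred (snd r')) \<in> (depends \<Pi>)\<^sup>*}"
    then have "(apred b, apred (snd r)) \<in> (depends \<Pi>)\<^sup>*" by simp
    with d have "(apred (snd r), apred (snd r)) \<in> (depends \<Pi>)\<^sup>+" by (meson rtrancl_into_trancl2)
    with assms(2) show False by (simp add: acyclic_def)
  qed
  moreover have "r \<in> {r'\<in>\<Pi>. (apred (snd r), apred (snd r')) \<in> (depends \<Pi>)\<^sup>*}" using assms(3) by simp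
  ultimately have "{r'\<in>\<Pi>. (apred b, apred (snd r')) \<in> (depends \<Pi>)\<^sup>*} < {r'\<in>\<Pi>. (apred (snd r), apred (snd r')) \<in> (depends \<Pi>)\<^sup>*}"
    using sub by blast
  then show ?thesis unfolding rk_def by (rule psubset_card_mono[rotated]) (use assms(1) in auto)
qed

lemma rk_le: "finite \<Pi> \<Longrightarrow> rk \<Pi> q \<le> card \<Pi>"
  unfolding rk_def by (rule card_mono) auto

definition good_rule :: "int \<Rightarrow> ('p,'o) rule \<Rightarrow> bool" where
  "good_rule m r = (\<exists>v k q os. snd r = Atom q os (Some (TV v k)) \<and>
     (\<forall>b\<in>set (fst r). \<exists>kb qb osb. b = Atom qb osb (Some (TV v kb)) \<and> \<bar>k - kb\<bar> \<le> m))"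

definition win :: "('p,'o) gatom set \<Rightarrow> int \<Rightarrow> int \<Rightarrow> ('p,'o) gatom set" where
  "win F t w = {f\<in>F. \<forall>s. gtime f = Some s \<longrightarrow> \<bar>s - t\<bar> \<le> w}"

lemma locality:
  assumes "derivable (\<Pi> \<union> fact_rule ` F) g"
    and good: "\<forall>r\<in>\<Pi>. good_rule m r" and m0: "0 \<le> m"
    and rk: "\<And>r b. r \<in> \<Pi> \<Longrightarrow> b \<in> set (fst r) \<Longrightarrow> h (apred b) < (h (apred (snd r)) :: nat)"
  shows "gtime g = Some t \<Longrightarrow> derivable (\<Pi> \<union> fact_rule ` win F t (int (h (gpred g)) * m)) g"
  using assms(1)
proof (induction arbitrary: t rule: derivable.induct)
  case (der r \<nu> \<mu>)
  from der.hyps(1) show ?case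
  proof
    assume rP: "r \<in> \<Pi>"
    then obtain v k q os where hd: "snd r = Atom q os (Some (TV v k))"
      and bd: "\<forall>b\<in>set (fst r). \<exists>kb qb osb. b = Atom qb osb (Some (TV v kb)) \<and> \<bar>k - kb\<bar> \<le> m"
      using good unfolding good_rule_def by blast
    have t: "t = \<mu> v + k" using der.prems hd by simp
    have "derivable (\<Pi> \<union> fact_rule ` win F t (int (h q) * m)) (inst \<nu> \<mu> a)" if a: "a \<in> set (fst r)" for a
    proof -
      obtain kb qb osb where ab: "a = Atom qb osb (Some (TV v kb))" "\<bar>k - kb\<bar> \<le> m" using bd a by blast
      have 1: "derivable (\<Pi> \<union> fact_rule ` win F (\<mu> v + kb) (int (h qb) * m)) (inst \<nu> \<mu> a)"
        using der.IH[OF a, of "\<mu> v + kb"] ab by simp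
      have "h qb < h q" using rk[OF rP a] hd ab by simp
      then have "(int (h qb) + 1) * m \<le> int (h q) * m" using m0 by (intro mult_right_mono) auto
      then have "win F (\<mu> v + kb) (int (h qb) * m) \<subseteq> win F t (int (h q) * m)"
        using ab(2) t unfolding win_def by (auto simp: algebra_simps)
      then show ?thesis using 1 by (meson derivable_mono image_mono Un_mono subset_refl)
    qed
    then have "derivable (\<Pi> \<union> fact_rule ` win F t (int (h q) * m)) (inst \<nu> \<mu> (snd r))"
      using rP by (intro derivable.der) auto
    then show ?thesis using hd by simp
  next
    assume "r \<in> fact_rule ` F"
    then obtain f where f: "r = fact_rule f" "f \<in> F" by blast
    then have "f \<in> win F t (int (h (gpred f)) * m)" using der.prems m0 unfolding win_def by auto
    then show ?thesis using f by (auto intro: der_fact)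
  qed
qed



lemma nonrigid_temporal: "\<not> is_rigid sig p \<Longrightarrow> is_temporal sig p"
  by (cases "snd (sig p)") (auto simp: is_rigid_def is_temporal_def)

lemma atom_form:
  assumes "wf_atom sig a" "\<not> is_rigid sig (apred a)" "\<forall>c. atime a \<noteq> Some (TC c)"
  shows "\<exists>q os v k. a = Atom q os (Some (TV v k))"
proof -
  obtain q os to where a: "a = Atom q os to" by (cases a)
  show ?thesis
  proof (cases "snd (sig q)")
    case (Rigid n) then show ?thesis using assms a by (auto simp: is_rigid_def)
  next
    case (Temporal n)
    then obtain s where s: "to = Some s" using assms a by auto
    show ?thesis
    proof (cases s)
      case (TC c) then show ?thesis using assms a s by auto
    next
      case (TV v k) then show ?thesis using a s by auto
    qed
  qed
qed

lemma shape:
  assumes wf: "wf_rule sig r" and con: "connected_rule r"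
    and nr: "\<forall>a\<in>rule_atoms r. \<not> is_rigid sig (apred a)"
    and nt: "\<forall>a\<in>rule_atoms r. \<forall>c. atime a \<noteq> Some (TC c)"
  shows "\<exists>v k q os. snd r = Atom q os (Some (TV v k)) \<and> \<not> is_edb sig q \<and>
     (\<forall>b\<in>set (fst r). \<exists>kb qb osb. b = Atom qb osb (Some (TV v kb)) \<and> \<not> is_rigid sig qb
         \<and> \<bar>k - kb\<bar> \<le> rule_radius r)"
proof -
  have af: "\<exists>q os v k. a = Atom q os (Some (TV v k))" if "a \<in> rule_atoms r" for a
    using atom_form[of sig a] that wf nr nt unfolding wf_rule_def rule_atoms_def by auto
  obtain q os v k where hd: "snd r = Atom q os (Some (TV v k))"
    using af[of "snd r"] unfolding rule_atoms_def by auto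
  have "v \<in> (\<Union>a\<in>set (fst r). atvars a)" using wf hd unfolding wf_rule_def by auto
  then have ne: "fst r \<noteq> []" by auto
  then have idb: "\<not> is_edb sig q" using wf hd unfolding wf_rule_def by auto
  let ?S = "{\<bar>delta s - delta s'\<bar> | s s' a. atime (snd r) = Some s \<and> a \<in> set (fst r) \<and> atime a = Some s'}"
  have "?S \<subseteq> (\<lambda>a. \<bar>k - delta (the (atime a))\<bar>) ` set (fst r)" using hd by (auto intro: rev_image_eqI)
  then have fin: "finite ?S" by (rule finite_subset) simp
  have "\<exists>kb qb osb. b = Atom qb osb (Some (TV v kb)) \<and> \<not> is_rigid sig qb \<and> \<bar>k - kb\<bar> \<le> rule_radius r"
    if b: "b \<in> set (fst r)" for b
  proof -
    obtain qb osb vb kb where bf: "b = Atom qb osb (Some (TV vb kb))"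
      using af[of b] b unfolding rule_atoms_def by auto
    have "vb \<in> atvars b" using bf by simp
    then have "vb \<in> atvars (snd r)" using con b unfolding connected_rule_def by blast
    then have vb: "vb = v" using hd by simp
    have "\<not> is_rigid sig qb" using nr b bf unfolding rule_atoms_def by auto
    moreover have "\<bar>k - kb\<bar> \<in> ?S" using hd b bf
      by (intro CollectI exI[of _ "TV v k"] exI[of _ "TV vb kb"] exI[of _ b]) auto
    then have "\<bar>k - kb\<bar> \<le> rule_radius r" unfolding rule_radius_def using fin by (intro Max_ge) auto
    ultimately show ?thesis using bf vb by blast
  qed
  then show ?thesis using hd idb by blast
qed



fun orig_g :: "('p,'o) gatom \<Rightarrow> ('p xpred,'o) gatom" where
  "orig_g (GA p os t) = GA (Orig p) os t"

lemma psi_cases: "psi sig p = Orig p \<or> psi sig p = Psi p"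
  by (simp add: psi_def)

lemma psi_Orig: "psi sig p = Orig p' \<Longrightarrow> p' = p" and psi_Psi: "psi sig p = Psi p' \<Longrightarrow> p' = p"
  by (auto simp: psi_def split: if_splits)

lemma psi_idb: "\<not> is_edb sig p \<Longrightarrow> psi sig p = Orig p" by (simp add: psi_def)

lemma psi_gatom_inst: "psi_gatom sig (inst \<nu> \<mu> a) = inst \<nu> \<mu> (psi_atom sig a)"
  by (cases a) simp

lemma inst_subst: "inst \<nu> \<mu> (subst_atom v c a) = inst \<nu> (\<mu>(v := c)) a"
proof -
  have "tinst \<mu> (subst_t v c s) = tinst (\<mu>(v := c)) s" for s by (cases s) auto
  then show ?thesis by (cases a) (auto simp: option.map_comp comp_def)
qed

lemma inst_ground[simp]: "inst \<nu> \<mu> (Atom p (map OC os) (map_option TC t)) = GA p os t"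
  by (simp add: option.map_comp comp_def option.map_ident)

lemma apred_psi_atom[simp]: "apred (psi_atom sig a) = psi sig (apred a)" by (cases a) simp
lemma atime_psi_atom[simp]: "atime (psi_atom sig a) = atime a" by (cases a) simp

context
  fixes sig :: "'p signature" and Q :: "('p,'o) query" and \<tau>in \<tau>out \<tau>mem :: int
  assumes shp: "\<forall>r\<in>snd Q. \<exists>v k q os. snd r = Atom q os (Some (TV v k)) \<and> \<not> is_edb sig q \<and>
     (\<forall>b\<in>set (fst r). \<exists>kb qb osb. b = Atom qb osb (Some (TV v kb)) \<and> \<not> is_rigid sig qb)"
    and PQ: "\<not> is_edb sig (fst Q)"
    and acy: "acyclic (depends (snd Q))"
begin

definition Pi1 :: "('p,'o) gatom set \<Rightarrow> ('p xpred,'o) gatom set \<Rightarrow> ('p xpred,'o) rule set" where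
  "Pi1 E D' = (constr_prog sig Q \<tau>out \<tau>mem \<union> fact_rule ` D0 Q \<tau>in \<tau>mem \<union> fact_rule ` psi_gatom sig ` E)
     \<union> fact_rule ` D'"

definition VR :: "('p xpred,'o) gatom set \<Rightarrow> ('p,'o) gatom set" where
  "VR D' = {f. orig_g f \<in> D' \<and> (\<exists>t. gtime f = Some t \<and> update_relevant Q \<tau>in \<tau>mem t)}"

fun Inv :: "('p,'o) gatom set \<Rightarrow> ('p xpred,'o) gatom set \<Rightarrow> ('p xpred,'o) gatom \<Rightarrow> bool" where
  "Inv E D' (GA Bp os t) = (\<exists>\<tau>. t = Some \<tau> \<and> update_relevant Q \<tau>in \<tau>mem \<tau>)"
| "Inv E D' (GA (Orig p) os t) = ((if is_edb sig p then GA (Orig p) os t \<in> D' \<or> GA p os t \<in> E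
       else derivable (snd Q \<union> fact_rule ` (E \<union> VR D')) (GA p os t))
     \<and> (p = fst Q \<longrightarrow> (\<exists>\<tau>. t = Some \<tau> \<and> output_relevant Q \<tau>out \<tau>mem \<tau>)))"
| "Inv E D' (GA (Psi p) os t) = derivable (snd Q \<union> fact_rule ` (E \<union> VR D')) (GA p os t)"

lemma Inv_body:
  assumes "Inv E D' (inst \<nu> \<mu> (psi_atom sig b))" "\<not> is_rigid sig (apred b)"
  shows "derivable (snd Q \<union> fact_rule ` (E \<union> VR D')) (inst \<nu> \<mu> b)"
proof -
  obtain q os t where b: "b = Atom q os t" by (cases b)
  show ?thesis
  proof (cases "is_edb sig q")
    case True
    then have "psi sig q = Psi q" using nonrigid_temporal[of sig q] assms(2) b by (simp add: psi_def)
    then show ?thesis using assms b by simp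
  next
    case False
    then show ?thesis using assms b by (simp add: psi_def)
  qed
qed

lemma soundness:
  assumes E: "\<forall>e\<in>E. is_edb sig (gpred e) \<and> (\<forall>s. gtime e = Some s \<longrightarrow> s \<le> \<tau>in)"
    and D': "dataset (xsig sig) D'"
  shows "derivable (Pi1 E D') g \<Longrightarrow> Inv E D' g"
proof (induction rule: derivable.induct)
  case (der r \<nu> \<mu>)
  let ?G = "snd Q \<union> fact_rule ` (E \<union> VR D')"
  have "r \<in> constr_prog sig Q \<tau>out \<tau>mem \<or> r \<in> fact_rule ` D0 Q \<tau>in \<tau>mem \<or> r \<in> fact_rule ` psi_gatom sig ` E
    \<or> r \<in> fact_rule ` D'" using der.hyps(1) unfolding Pi1_def by blast
  moreover {
    assume "r \<in> fact_rule ` D0 Q \<tau>in \<tau>mem"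
    then have ?case unfolding D0_def by auto
  } moreover {
    assume "r \<in> fact_rule ` psi_gatom sig ` E"
    then obtain e where e: "e \<in> E" "r = fact_rule (psi_gatom sig e)" by blast
    obtain p os t where ep: "e = GA p os t" by (cases e)
    have edb: "is_edb sig p" using E e ep by auto
    have de: "derivable ?G e" using e by (intro der_fact) auto
    have gi: "inst \<nu> \<mu> (snd r) = psi_gatom sig e" using e(2) by simp
    have ?case unfolding gi
    proof (cases "is_temporal sig p")
      case True then show "Inv E D' (psi_gatom sig e)" using e ep edb de by (simp add: psi_def)
    next
      case False then show "Inv E D' (psi_gatom sig e)" using e ep edb PQ by (auto simp: psi_def)
    qed
  } moreover {
    assume "r \<in> fact_rule ` D'"
    then obtain d where d: "d \<in> D'" "r = fact_rule d" by blast
    obtain x os t where dx: "d = GA x os t" by (cases d)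
    have "is_edb (xsig sig) x" using D' d dx unfolding dataset_def by auto
    then obtain p where "x = Orig p" "is_edb sig p"
      by (cases x) (auto simp: xsig_def is_edb_def)
    moreover have gi: "inst \<nu> \<mu> (snd r) = d" using d(2) by simp
    ultimately have ?case using d dx PQ by auto
  } moreover {
    assume "r \<in> constr_prog sig Q \<tau>out \<tau>mem"
    then consider (i) "r \<in> psi_rule sig ` snd Q" "apred (snd r) \<noteq> Orig (fst Q)"
      | (ii) r1 v k \<tau> where "r = subst_rule v (\<tau> - k) r1" "r1 \<in> psi_rule sig ` snd Q"
          "apred (snd r1) = Orig (fst Q)" "atime (snd r1) = Some (TV v k)" "output_relevant Q \<tau>out \<tau>mem \<tau>"
      | (iii) p n where "r = ([Atom (Orig p) (map OV [0..<n]) (Some (TV 0 0)), Atom Bp [] (Some (TV 0 0))],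
         Atom (Psi p) (map OV [0..<n]) (Some (TV 0 0)))" "is_edb sig p"
      unfolding constr_prog_def by blast
    then have ?case
    proof cases
      case i
      then obtain r0 where r0: "r0 \<in> snd Q" "r = psi_rule sig r0" by blast
      then obtain v k q os where hd: "snd r0 = Atom q os (Some (TV v k))" "\<not> is_edb sig q"
        and bd: "\<forall>b\<in>set (fst r0). \<not> is_rigid sig (apred b)" using shp by fastforce
      have qP: "q \<noteq> fst Q" using i r0 hd by (auto simp: psi_rule_def psi_idb)
      have "derivable ?G (inst \<nu> \<mu> a)" if a: "a \<in> set (fst r0)" for a
        using der.IH[of "psi_atom sig a"] a r0 bd Inv_body by (auto simp: psi_rule_def)
      then have "derivable ?G (inst \<nu> \<mu> (snd r0))" using r0 by (intro derivable.der) auto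
      then show ?thesis using r0 hd qP by (simp add: psi_rule_def psi_idb)
    next
      case (ii r1 v k \<tau>)
      then obtain r0 where r0: "r0 \<in> snd Q" "r1 = psi_rule sig r0" by blast
      then obtain v' k' q os where hd: "snd r0 = Atom q os (Some (TV v' k'))" "\<not> is_edb sig q"
        and bd: "\<forall>b\<in>set (fst r0). \<not> is_rigid sig (apred b)" using shp by fastforce
      have qP: "q = fst Q" "v' = v" "k' = k" using ii r0 hd
        by (auto simp: psi_rule_def psi_idb)
      let ?\<mu> = "\<mu>(v := \<tau> - k)"
      have "derivable ?G (inst \<nu> ?\<mu> a)" if a: "a \<in> set (fst r0)" for a
        using der.IH[of "subst_atom v (\<tau> - k) (psi_atom sig a)"] a r0 bd Inv_body ii(1)
        by (auto simp: psi_rule_def subst_rule_def inst_subst)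
      then have "derivable ?G (inst \<nu> ?\<mu> (snd r0))" using r0 by (intro derivable.der) auto
      then show ?thesis using r0 hd qP ii PQ
        by (simp add: psi_rule_def psi_idb subst_rule_def)
    next
      case (iii p n)
      let ?t = "\<mu> 0"
      let ?os = "map (oinst \<nu>) (map OV [0..<n])"
      have 1: "Inv E D' (GA (Orig p) ?os (Some ?t))" using der.IH[of "Atom (Orig p) (map OV [0..<n]) (Some (TV 0 0))"] iii by simp
      have 2: "Inv E D' (GA Bp [] (Some ?t))" using der.IH[of "Atom Bp [] (Some (TV 0 0))"] iii by simp
      from 2 have ur: "update_relevant Q \<tau>in \<tau>mem ?t" by simp
      then have "GA p ?os (Some ?t) \<notin> E" using E unfolding update_relevant_def by force
      then have "GA (Orig p) ?os (Some ?t) \<in> D'" using 1 iii by simp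
      then have "GA p ?os (Some ?t) \<in> VR D'" using ur unfolding VR_def by auto
      then have "derivable ?G (GA p ?os (Some ?t))" by (meson UnI2 imageI der_fact)
      then show ?thesis using iii by simp
    qed
  }
  ultimately show ?case by blast
qed


lemma completeness:
  assumes F: "\<forall>f\<in>F. f \<in> E \<or> f \<in> VR D'"
    and D': "dataset (xsig sig) D'"
  shows "derivable (snd Q \<union> fact_rule ` F) g \<Longrightarrow>
    ((fst Q, gpred g) \<in> (depends (snd Q))\<^sup>* \<longrightarrow> gpred g \<noteq> fst Q \<longrightarrow> derivable (Pi1 E D') (psi_gatom sig g))
    \<and> (gpred g = fst Q \<longrightarrow> (\<exists>\<tau>. gtime g = Some \<tau> \<and> output_relevant Q \<tau>out \<tau>mem \<tau>)
         \<longrightarrow> derivable (Pi1 E D') (psi_gatom sig g))"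
proof (induction rule: derivable.induct)
  case (der r \<nu> \<mu>)
  from der.hyps(1) show ?case
  proof
    assume "r \<in> fact_rule ` F"
    then obtain f where f: "f \<in> F" "r = fact_rule f" by blast
    have gi: "inst \<nu> \<mu> (snd r) = f" using f(2) by simp
    show ?case unfolding gi
    proof (cases "f \<in> E")
      case True
      then have "derivable (Pi1 E D') (psi_gatom sig f)"
        unfolding Pi1_def by (intro der_fact UnI1 UnI2 imageI)
      then show "((fst Q, gpred f) \<in> (depends (snd Q))\<^sup>* \<longrightarrow> gpred f \<noteq> fst Q \<longrightarrow> derivable (Pi1 E D') (psi_gatom sig f))
    \<and> (gpred f = fst Q \<longrightarrow> (\<exists>\<tau>. gtime f = Some \<tau> \<and> output_relevant Q \<tau>out \<tau>mem \<tau>)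
         \<longrightarrow> derivable (Pi1 E D') (psi_gatom sig f))" by blast
    next
      case False
      then have fv: "f \<in> VR D'" using F f by blast
      then obtain p os t where fp: "f = GA p os (Some t)" "GA (Orig p) os (Some t) \<in> D'"
         "update_relevant Q \<tau>in \<tau>mem t"
        unfolding VR_def by (cases f) auto
      have edb: "is_edb sig p" and wf: "wf_gatom sig (GA p os (Some t))"
        using D' fp(2) unfolding dataset_def
        by (auto simp: xsig_def is_edb_def split: pshape.splits)
      then obtain n where n: "snd (sig p) = Temporal n" "length os = n"
        by (cases "snd (sig p)") auto
      have ps: "psi sig p = Psi p" using edb n by (simp add: psi_def is_temporal_def)
      have pP: "p \<noteq> fst Q" using edb PQ by auto
      have "derivable (Pi1 E D') (psi_gatom sig f)" if dep: "(fst Q, p) \<in> (depends (snd Q))\<^sup>*"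
      proof -
        from dep have "fst Q = p \<or> (\<exists>x. (x, p) \<in> depends (snd Q))" by (cases rule: rtranclE) auto
        with pP obtain x where "(x, p) \<in> depends (snd Q)" by blast
        then obtain r0 a where "r0 \<in> snd Q" "a \<in> set (fst r0)" "p = apred a"
          unfolding depends_def by blast
        then have "a \<in> rule_atoms r0" "r0 \<in> snd Q" "p = apred a" unfolding rule_atoms_def by auto
        then have pin: "p \<in> preds_of (snd Q)" unfolding preds_of_def by blast
        let ?r = "([Atom (Orig p) (map OV [0..<n]) (Some (TV 0 0)), Atom Bp [] (Some (TV 0 0))],
           Atom (Psi p) (map OV [0..<n]) (Some (TV 0 0))) :: ('p xpred, 'o) rule"
        have rin: "?r \<in> Pi1 E D'" using pin edb n unfolding Pi1_def constr_prog_def by blast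
        let ?\<nu> = "\<lambda>i. os ! i" and ?\<mu> = "\<lambda>_::nat. t"
        have mo: "map (oinst ?\<nu>) (map OV [0..<n]) = os" using n(2) map_nth[of os] by (simp add: comp_def)
        have a1: "derivable (Pi1 E D') (GA (Orig p) os (Some t))"
          using fp(2) unfolding Pi1_def by (intro der_fact UnI2 imageI)
        have a2: "derivable (Pi1 E D') (GA Bp [] (Some t))"
          proof (rule der_fact)
          have "GA Bp [] (Some t) \<in> D0 Q \<tau>in \<tau>mem" using fp(3) unfolding D0_def by blast
          then show "fact_rule (GA Bp [] (Some t)) \<in> Pi1 E D'" unfolding Pi1_def by blast
        qed
        have "derivable (Pi1 E D') (inst ?\<nu> ?\<mu> (snd ?r))"
        proof (rule derivable.der[OF rin])
          fix b assume "b \<in> set (fst ?r)"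
          then show "derivable (Pi1 E D') (inst ?\<nu> ?\<mu> b)" using a1 a2 mo by auto
        qed
        then show ?thesis using mo fp ps by simp
      qed
      then show "((fst Q, gpred f) \<in> (depends (snd Q))\<^sup>* \<longrightarrow> gpred f \<noteq> fst Q \<longrightarrow> derivable (Pi1 E D') (psi_gatom sig f))
    \<and> (gpred f = fst Q \<longrightarrow> (\<exists>\<tau>. gtime f = Some \<tau> \<and> output_relevant Q \<tau>out \<tau>mem \<tau>)
         \<longrightarrow> derivable (Pi1 E D') (psi_gatom sig f))" using fp pP by auto
    qed
  next
    assume rQ: "r \<in> snd Q"
    then obtain v k q os where hd: "snd r = Atom q os (Some (TV v k))" "\<not> is_edb sig q"
      using shp by fastforce
    have ps: "psi sig q = Orig q" using hd by (simp add: psi_idb)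
    have dep: "(q, apred a) \<in> depends (snd Q)" if "a \<in> set (fst r)" for a
    proof -
      have "(apred (snd r), apred a) \<in> depends (snd Q)" unfolding depends_def using rQ that by blast
      then show ?thesis using hd by simp
    qed
    have body: "derivable (Pi1 E D') (inst \<nu> \<mu> (psi_atom sig a))"
      if qS: "(fst Q, q) \<in> (depends (snd Q))\<^sup>*" and a: "a \<in> set (fst r)" for a
    proof -
      have "(fst Q, apred a) \<in> (depends (snd Q))\<^sup>*" using qS dep[OF a] by (rule rtrancl_into_rtrancl)
      moreover have "apred a \<noteq> fst Q"
      proof
        assume "apred a = fst Q"
        then have "(q, fst Q) \<in> depends (snd Q)" using dep[OF a] by simp
        then have "(q, q) \<in> (depends (snd Q))\<^sup>+" using qS by (rule rtrancl_into_trancl2)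
        then show False using acy by (simp add: acyclic_def)
      qed
      moreover have "gpred (inst \<nu> \<mu> a) = apred a" by (cases a) simp
      ultimately show ?thesis using der.IH[OF a] by (simp add: psi_gatom_inst)
    qed
    have A: "derivable (Pi1 E D') (psi_gatom sig (inst \<nu> \<mu> (snd r)))"
      if qS: "(fst Q, q) \<in> (depends (snd Q))\<^sup>*" and qP: "q \<noteq> fst Q"
    proof -
      have 1: "psi_rule sig r \<in> psi_rule sig ` snd Q" using rQ by (rule imageI)
      have 2: "apred (snd (psi_rule sig r)) \<noteq> Orig (fst Q)" using hd ps qP by (simp add: psi_rule_def)
      have "psi_rule sig r \<in> constr_prog sig Q \<tau>out \<tau>mem" unfolding constr_prog_def using 1 2 by blast
      then have rin: "psi_rule sig r \<in> Pi1 E D'" unfolding Pi1_def by blast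
      have "derivable (Pi1 E D') (inst \<nu> \<mu> (snd (psi_rule sig r)))"
      proof (rule derivable.der[OF rin])
        fix b assume "b \<in> set (fst (psi_rule sig r))"
        then obtain a where "a \<in> set (fst r)" "b = psi_atom sig a" by (auto simp: psi_rule_def)
        then show "derivable (Pi1 E D') (inst \<nu> \<mu> b)" using body[OF qS] by simp
      qed
      then show ?thesis by (simp add: psi_rule_def psi_gatom_inst)
    qed
    have B: "derivable (Pi1 E D') (psi_gatom sig (inst \<nu> \<mu> (snd r)))"
      if qP: "q = fst Q" and orl: "output_relevant Q \<tau>out \<tau>mem (\<mu> v + k)"
    proof -
      let ?\<tau> = "\<mu> v + k"
      have 1: "psi_rule sig r \<in> psi_rule sig ` snd Q" using rQ by (rule imageI)
      have 2: "apred (snd (psi_rule sig r)) = Orig (fst Q)" using hd ps qP by (simp add: psi_rule_def)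
      have 3: "atime (snd (psi_rule sig r)) = Some (TV v k)" using hd by (simp add: psi_rule_def)
      have "subst_rule v (?\<tau> - k) (psi_rule sig r) \<in> {subst_rule v (\<tau> - k) r | r v k \<tau>. r \<in> psi_rule sig ` snd Q
        \<and> apred (snd r) = Orig (fst Q) \<and> atime (snd r) = Some (TV v k)
        \<and> output_relevant Q \<tau>out \<tau>mem \<tau>}" using 1 2 3 orl by blast
      then have "subst_rule v (?\<tau> - k) (psi_rule sig r) \<in> constr_prog sig Q \<tau>out \<tau>mem"
        unfolding constr_prog_def by blast
      then have rin: "subst_rule v (?\<tau> - k) (psi_rule sig r) \<in> Pi1 E D'" unfolding Pi1_def by blast
      have mu: "\<mu>(v := ?\<tau> - k) = \<mu>" by simp
      have qS: "(fst Q, q) \<in> (depends (snd Q))\<^sup>*" using qP by simp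
      have "derivable (Pi1 E D') (inst \<nu> \<mu> (snd (subst_rule v (?\<tau> - k) (psi_rule sig r))))"
      proof (rule derivable.der[OF rin])
        fix b assume "b \<in> set (fst (subst_rule v (?\<tau> - k) (psi_rule sig r)))"
        then obtain a where "a \<in> set (fst r)" "b = subst_atom v (?\<tau> - k) (psi_atom sig a)"
          by (auto simp: psi_rule_def subst_rule_def)
        then show "derivable (Pi1 E D') (inst \<nu> \<mu> b)" using body[OF qS] by (simp only: inst_subst mu)
      qed
      then show ?thesis by (simp add: psi_rule_def subst_rule_def inst_subst mu psi_gatom_inst)
    qed
    show ?case using A B hd by auto
  qed
qed


lemma sound_top:
  assumes E: "\<forall>e\<in>E. is_edb sig (gpred e) \<and> (\<forall>s. gtime e = Some s \<longrightarrow> s \<le> \<tau>in)"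
    and D': "dataset (xsig sig) D'"
    and d: "derivable ((constr_prog sig Q \<tau>out \<tau>mem \<union> fact_rule ` D0 Q \<tau>in \<tau>mem \<union> fact_rule ` psi_gatom sig ` E)
     \<union> fact_rule ` D') (GA (Orig (fst Q)) os t)"
  shows "\<exists>\<tau>. t = Some \<tau> \<and> output_relevant Q \<tau>out \<tau>mem \<tau> \<and>
     derivable (snd Q \<union> fact_rule ` (E \<union> {f. orig_g f \<in> D' \<and> (\<exists>t. gtime f = Some t \<and> update_relevant Q \<tau>in \<tau>mem t)}))
       (GA (fst Q) os (Some \<tau>))"
proof -
  have "Inv E D' (GA (Orig (fst Q)) os t)" using soundness[OF E D'] d unfolding Pi1_def by blast
  then show ?thesis using PQ by (auto simp: VR_def)
qed

lemma compl_top: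
  assumes F: "\<forall>f\<in>F. f \<in> E \<or> (orig_g f \<in> D' \<and> (\<exists>t. gtime f = Some t \<and> update_relevant Q \<tau>in \<tau>mem t))"
    and D': "dataset (xsig sig) D'"
    and d: "derivable (snd Q \<union> fact_rule ` F) (GA (fst Q) os (Some \<tau>))"
    and o: "output_relevant Q \<tau>out \<tau>mem \<tau>"
  shows "derivable ((constr_prog sig Q \<tau>out \<tau>mem \<union> fact_rule ` D0 Q \<tau>in \<tau>mem \<union> fact_rule ` psi_gatom sig ` E)
     \<union> fact_rule ` D') (GA (Orig (fst Q)) os (Some \<tau>))"
proof -
  have F': "\<forall>f\<in>F. f \<in> E \<or> f \<in> VR D'" using F unfolding VR_def by blast
  have "derivable (Pi1 E D') (psi_gatom sig (GA (fst Q) os (Some \<tau>)))"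
    using completeness[OF F' D' d] o by simp
  then show ?thesis using PQ unfolding Pi1_def by (simp add: psi_idb)
qed

end


lemma orig_g_inj: "orig_g f = orig_g g \<Longrightarrow> f = g"
  by (cases f; cases g) auto

theorem lemma8:
  fixes sig :: "'p signature" and Q :: "('p,'o) query" and D :: "('p,'o) gatom set"
    and \<tau>in \<tau>out \<tau>mem :: int
  assumes "infinite (UNIV :: 'o set)"
    and "forget_instance sig Q D \<tau>in \<tau>out \<tau>mem"
    and "nonrecursive (snd Q)"
    and "connected_prog (snd Q)"
    and "no_rigid_atoms sig (snd Q)"
    and "no_time_points (snd Q)"
  shows "forget_holds sig Q D \<tau>in \<tau>out \<tau>mem \<longleftrightarrow>
         contained (xsig sig) (Q1 sig Q D \<tau>in \<tau>out \<tau>mem) (Q2 sig Q D \<tau>in \<tau>out \<tau>mem)"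
proof -
  have tq: "is_temporal_query sig Q" and hist: "is_history sig \<tau>in D"
    and le1: "\<tau>mem \<le> \<tau>out" and le2: "\<tau>out \<le> \<tau>in"
    using assms(2) by (auto simp: forget_instance_def)
  then have wfp: "wf_program sig (snd Q)" and PQ: "\<not> is_edb sig (fst Q)"
    by (auto simp: is_temporal_query_def is_query_def)
  then have fin: "finite (snd Q)" and wfr: "\<forall>r\<in>snd Q. wf_rule sig r" by (auto simp: wf_program_def)
  have acy: "acyclic (depends (snd Q))" using assms(3) by (simp add: nonrecursive_def)
  have shp0: "\<forall>r\<in>snd Q. \<exists>v k q os. snd r = Atom q os (Some (TV v k)) \<and> \<not> is_edb sig q \<and>
     (\<forall>b\<in>set (fst r). \<exists>kb qb osb. b = Atom qb osb (Some (TV v kb)) \<and> \<not> is_rigid sig qb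
         \<and> \<bar>k - kb\<bar> \<le> rule_radius r)"
  proof
    fix r assume r: "r \<in> snd Q"
    show "\<exists>v k q os. snd r = Atom q os (Some (TV v k)) \<and> \<not> is_edb sig q \<and>
     (\<forall>b\<in>set (fst r). \<exists>kb qb osb. b = Atom qb osb (Some (TV v kb)) \<and> \<not> is_rigid sig qb
         \<and> \<bar>k - kb\<bar> \<le> rule_radius r)"
      by (rule shape) (use r wfr assms(4,5,6) in \<open>auto simp: connected_prog_def no_rigid_atoms_def no_time_points_def\<close>)
  qed
  have shp: "\<forall>r\<in>snd Q. \<exists>v k q os. snd r = Atom q os (Some (TV v k)) \<and> \<not> is_edb sig q \<and>
     (\<forall>b\<in>set (fst r). \<exists>kb qb osb. b = Atom qb osb (Some (TV v kb)) \<and> \<not> is_rigid sig qb)"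
    using shp0 by fast
  define m where "m = Max ({0} \<union> rule_radius ` snd Q)"
  have m0: "0 \<le> m" and mr: "\<forall>r\<in>snd Q. rule_radius r \<le> m" using fin by (auto simp: m_def)
  have good: "\<forall>r\<in>snd Q. good_rule m r"
  proof
    fix r assume r: "r \<in> snd Q"
    then obtain v k q os where "snd r = Atom q os (Some (TV v k))"
      "\<forall>b\<in>set (fst r). \<exists>kb qb osb. b = Atom qb osb (Some (TV v kb)) \<and> \<bar>k - kb\<bar> \<le> rule_radius r"
      using shp0 by fast
    then show "good_rule m r" unfolding good_rule_def using mr r by (meson order_trans)
  qed
  define R where "R = prog_radius (snd Q)"
  have R: "R = int (card (snd Q)) * m" by (simp add: R_def prog_radius_def m_def)
  have hR: "int (rk (snd Q) (fst Q)) * m \<le> R" using rk_le[OF fin, of "fst Q"] m0 R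
    by (simp add: mult_right_mono)
  have R0: "0 \<le> R" using R m0 by simp
  have loc: "derivable (snd Q \<union> fact_rule ` win F \<tau> R) (GA (fst Q) os (Some \<tau>))"
    if "derivable (snd Q \<union> fact_rule ` F) (GA (fst Q) os (Some \<tau>))" for F os \<tau>
  proof -
    have "derivable (snd Q \<union> fact_rule ` win F \<tau> (int (rk (snd Q) (fst Q)) * m)) (GA (fst Q) os (Some \<tau>))"
      using locality[OF that good m0, of "rk (snd Q)"] rk_less[OF fin acy] by simp
    moreover have "win F \<tau> (int (rk (snd Q) (fst Q)) * m) \<subseteq> win F \<tau> R" using hR unfolding win_def by force
    ultimately show ?thesis by (meson derivable_mono image_mono Un_mono subset_refl)
  qed
  have Edb_D: "\<forall>e\<in>D. is_edb sig (gpred e) \<and> (\<forall>s. gtime e = Some s \<longrightarrow> s \<le> \<tau>in)"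
    using hist by (auto simp: is_history_def dataset_def)
  have Edb_DR: "\<forall>e\<in>restrict_after D \<tau>mem. is_edb sig (gpred e) \<and> (\<forall>s. gtime e = Some s \<longrightarrow> s \<le> \<tau>in)"
    using Edb_D by (auto simp: restrict_after_def)
  have ans_at: "\<And>X \<tau>. answers_at Q X \<tau> = {os. derivable (snd Q \<union> fact_rule ` X) (GA (fst Q) os (Some \<tau>))}"
    by (simp add: answers_at_def entails_iff)
  define VRs where "VRs D' = {f. orig_g f \<in> D' \<and> (\<exists>t. gtime f = Some t \<and> update_relevant Q \<tau>in \<tau>mem t)}"
    for D' :: "('p xpred,'o) gatom set"
  show ?thesis
  proof
    assume fh: "forget_holds sig Q D \<tau>in \<tau>out \<tau>mem"
    show "contained (xsig sig) (Q1 sig Q D \<tau>in \<tau>out \<tau>mem) (Q2 sig Q D \<tau>in \<tau>out \<tau>mem)"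
      unfolding contained_def
    proof (intro allI impI subsetI)
      fix D' x assume D': "dataset (xsig sig) D'" and x: "x \<in> answers (Q1 sig Q D \<tau>in \<tau>out \<tau>mem) D'"
      obtain os t where xt: "x = (os, t)" and d: "derivable ((constr_prog sig Q \<tau>out \<tau>mem \<union> fact_rule ` D0 Q \<tau>in \<tau>mem \<union> fact_rule ` psi_gatom sig ` D)
     \<union> fact_rule ` D') (GA (Orig (fst Q)) os t)"
        using x by (cases x) (auto simp: answers_def entails_iff Q1_def)
      from sound_top[OF shp PQ acy Edb_D D' d] obtain \<tau> where tt: "t = Some \<tau>"
        and orl: "output_relevant Q \<tau>out \<tau>mem \<tau>"
        and dd: "derivable (snd Q \<union> fact_rule ` (D \<union> VRs D')) (GA (fst Q) os (Some \<tau>))"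
        unfolding VRs_def by blast
      have upd: "is_update sig \<tau>in (VRs D')"
      proof -
        obtain un :: "('p xpred,'o) gatom \<Rightarrow> ('p,'o) gatom" where un: "\<And>f. un (orig_g f) = f"
          using orig_g_inj by (metis inv_f_f injI)
        have "VRs D' \<subseteq> un ` D'" unfolding VRs_def using un by (auto intro: rev_image_eqI)
        then have "finite (VRs D')" using D' unfolding dataset_def by (meson finite_surj)
        moreover have "wf_gatom sig f \<and> is_edb sig (gpred f)" if "f \<in> VRs D'" for f
        proof -
          obtain p os t where "f = GA p os t" by (cases f)
          then show ?thesis using that D' unfolding VRs_def dataset_def
            by (auto simp: xsig_def is_edb_def)
        qed
        moreover have "\<exists>s. gtime f = Some s \<and> s > \<tau>in" if "f \<in> VRs D'" for f
          using that unfolding VRs_def update_relevant_def by auto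
        ultimately show ?thesis unfolding is_update_def dataset_def by blast
      qed
      have "os \<in> answers_at Q (D \<union> VRs D') \<tau>" using dd ans_at by simp
      then have "os \<in> answers_at Q (restrict_after D \<tau>mem \<union> VRs D') \<tau>"
        using fh upd orl unfolding forget_holds_def output_relevant_def by blast
      then have d2: "derivable (snd Q \<union> fact_rule ` (restrict_after D \<tau>mem \<union> VRs D')) (GA (fst Q) os (Some \<tau>))"
        using ans_at by simp
      have "derivable ((constr_prog sig Q \<tau>out \<tau>mem \<union> fact_rule ` D0 Q \<tau>in \<tau>mem \<union> fact_rule ` psi_gatom sig ` restrict_after D \<tau>mem)
     \<union> fact_rule ` D') (GA (Orig (fst Q)) os (Some \<tau>))"
        by (rule compl_top[OF shp PQ acy _ D' d2 orl]) (auto simp: VRs_def)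
      then show "x \<in> answers (Q2 sig Q D \<tau>in \<tau>out \<tau>mem) D'"
        by (simp add: answers_def entails_iff Q2_def xt tt)
    qed
  next
    assume ct: "contained (xsig sig) (Q1 sig Q D \<tau>in \<tau>out \<tau>mem) (Q2 sig Q D \<tau>in \<tau>out \<tau>mem)"
    show "forget_holds sig Q D \<tau>in \<tau>out \<tau>mem"
      unfolding forget_holds_def
    proof (intro allI impI)
      fix U :: "('p,'o) gatom set" and \<tau> :: int assume U: "is_update sig \<tau>in U" and \<tau>: "\<tau>out \<le> \<tau>"
      have rsub: "restrict_after D \<tau>mem \<subseteq> D" by (auto simp: restrict_after_def)
      have sub: "answers_at Q (restrict_after D \<tau>mem \<union> U) \<tau> \<subseteq> answers_at Q (D \<union> U) \<tau>"
        unfolding ans_at using rsub by (auto elim!: derivable_mono)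
      have "answers_at Q (D \<union> U) \<tau> \<subseteq> answers_at Q (restrict_after D \<tau>mem \<union> U) \<tau>"
      proof
        fix os assume "os \<in> answers_at Q (D \<union> U) \<tau>"
        then have d: "derivable (snd Q \<union> fact_rule ` (D \<union> U)) (GA (fst Q) os (Some \<tau>))" using ans_at by simp
        have dw: "derivable (snd Q \<union> fact_rule ` win (D \<union> U) \<tau> R) (GA (fst Q) os (Some \<tau>))" using loc[OF d] .
        show "os \<in> answers_at Q (restrict_after D \<tau>mem \<union> U) \<tau>"
        proof (cases "\<tau> \<le> \<tau>mem + R")
          case False
          have "win (D \<union> U) \<tau> R \<subseteq> restrict_after D \<tau>mem \<union> U"
          proof
            fix f assume f: "f \<in> win (D \<union> U) \<tau> R"
            show "f \<in> restrict_after D \<tau>mem \<union> U"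
            proof (cases "gtime f")
              case None then show ?thesis using f by (auto simp: win_def restrict_after_def)
            next
              case (Some s)
              then have "\<bar>s - \<tau>\<bar> \<le> R" using f by (auto simp: win_def)
              then have "s > \<tau>mem" using False by linarith
              then show ?thesis using f Some by (auto simp: win_def restrict_after_def)
            qed
          qed
          then have "derivable (snd Q \<union> fact_rule ` (restrict_after D \<tau>mem \<union> U)) (GA (fst Q) os (Some \<tau>))"
            using dw by (meson derivable_mono image_mono Un_mono subset_refl)
          then show ?thesis using ans_at by simp
        next
          case True
          then have orl: "output_relevant Q \<tau>out \<tau>mem \<tau>" using \<tau> unfolding output_relevant_def R_def by simp
          define D' where "D' = orig_g ` U"
          have D'ds: "dataset (xsig sig) D'"
          proof -
            have "finite D'" using U unfolding D'_def is_update_def dataset_def by simp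
            moreover have "wf_gatom (xsig sig) d \<and> is_edb (xsig sig) (gpred d)" if dD: "d \<in> D'" for d
            proof -
              obtain f where f: "f \<in> U" "d = orig_g f" using dD unfolding D'_def by blast
              obtain p os t where "f = GA p os t" by (cases f)
              then show ?thesis using f U unfolding is_update_def dataset_def
                by (auto simp: xsig_def is_edb_def)
            qed
            ultimately show ?thesis unfolding dataset_def by blast
          qed
          have W: "\<forall>f\<in>win (D \<union> U) \<tau> R. f \<in> D \<or> (orig_g f \<in> D' \<and> (\<exists>t. gtime f = Some t \<and> update_relevant Q \<tau>in \<tau>mem t))"
          proof
            fix f assume f: "f \<in> win (D \<union> U) \<tau> R"
            show "f \<in> D \<or> (orig_g f \<in> D' \<and> (\<exists>t. gtime f = Some t \<and> update_relevant Q \<tau>in \<tau>mem t))"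
            proof (cases "f \<in> D")
              case False
              then have fU: "f \<in> U" using f by (auto simp: win_def)
              then obtain s where s: "gtime f = Some s" "s > \<tau>in" using U unfolding is_update_def by blast
              then have "\<bar>s - \<tau>\<bar> \<le> R" using f by (auto simp: win_def)
              then have "update_relevant Q \<tau>in \<tau>mem s" using s True unfolding update_relevant_def R_def by simp
              then show ?thesis using fU s unfolding D'_def by blast
            qed simp
          qed
          have "derivable ((constr_prog sig Q \<tau>out \<tau>mem \<union> fact_rule ` D0 Q \<tau>in \<tau>mem \<union> fact_rule ` psi_gatom sig ` D)
             \<union> fact_rule ` D') (GA (Orig (fst Q)) os (Some \<tau>))"
            by (rule compl_top[OF shp PQ acy W D'ds dw orl])
          then have "(os, Some \<tau>) \<in> answers (Q1 sig Q D \<tau>in \<tau>out \<tau>mem) D'"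
            by (simp add: answers_def entails_iff Q1_def)
          then have "(os, Some \<tau>) \<in> answers (Q2 sig Q D \<tau>in \<tau>out \<tau>mem) D'"
            using ct D'ds unfolding contained_def by blast
          then have d2: "derivable ((constr_prog sig Q \<tau>out \<tau>mem \<union> fact_rule ` D0 Q \<tau>in \<tau>mem \<union> fact_rule ` psi_gatom sig ` restrict_after D \<tau>mem)
             \<union> fact_rule ` D') (GA (Orig (fst Q)) os (Some \<tau>))"
            by (simp add: answers_def entails_iff Q2_def)
          from sound_top[OF shp PQ acy Edb_DR D'ds d2]
          have d3: "derivable (snd Q \<union> fact_rule ` (restrict_after D \<tau>mem \<union> VRs D')) (GA (fst Q) os (Some \<tau>))"
            unfolding VRs_def by auto
          have "VRs D' \<subseteq> U" unfolding VRs_def D'_def using orig_g_inj by blast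
          then have "derivable (snd Q \<union> fact_rule ` (restrict_after D \<tau>mem \<union> U)) (GA (fst Q) os (Some \<tau>))"
            using d3 by (meson derivable_mono image_mono Un_mono subset_refl)
          then show ?thesis using ans_at by simp
        qed
      qed
      with sub show "answers_at Q (D \<union> U) \<tau> = answers_at Q (restrict_after D \<tau>mem \<union> U) \<tau>" by blast
    qed
  qed
qed

end
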